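(* Let $H$ and $K$ be finite groups that admit no common nonabelian simple quotient (i.e., there is no nonabelian simple group that is isomorphic to a quotient of $H$ and also to a quotient of $K$). Then $\mathrm{MaxDim}(H \times K) = \mathrm{MaxDim}(H) + \mathrm{MaxDim}(K)$.
   Context: All groups are finite. A finite set $\{H_1,\dots,H_n\}$ of subgroups of a group $G$ is in general position if for every $1 \le j \le n$, $\bigcap_{i \neq j} H_i \supsetneq \bigcap_{i} H_i$. $\mathrm{MaxDim}(G)$ is the largest cardinality of a collection of maximal subgroups of $G$ that is in general position. *)

theory Defs
  imports "HOL-Algebra.Algebra"
begin

definition maximal_subgroup :: "'a set \<Rightarrow> ('a, 'b) monoid_scheme \<Rightarrow> bool" where
  "maximal_subgroup M G \<longleftrightarrow> subgroup M G \<and> M \<noteq> carrier G \<and>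
     (\<forall>N. subgroup N G \<and> M \<subseteq> N \<longrightarrow> N = M \<or> N = carrier G)"

text \<open>Intersections are taken inside the group, so the empty intersection is the whole group.\<close>
definition general_position :: "('a, 'b) monoid_scheme \<Rightarrow> 'a set set \<Rightarrow> bool" where
  "general_position G S \<longleftrightarrow> finite S \<and>
     (\<forall>H\<in>S. carrier G \<inter> \<Inter>S \<subset> carrier G \<inter> \<Inter>(S - {H}))"

definition MaxDim :: "('a, 'b) monoid_scheme \<Rightarrow> nat" where
  "MaxDim G = Max {card S | S. S \<subseteq> {M. maximal_subgroup M G} \<and> general_position G S}"

end

theory Submission
  imports Defs
begin

lemma gp_iff:
  "general_position G S \<longleftrightarrow> finite S \<and>
     (\<forall>U\<in>S. \<exists>g\<in>carrier G. (\<forall>Y\<in>S - {U}. g \<in> Y) \<and> g \<notin> U)"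
proof -
  have "carrier G \<inter> \<Inter>S \<subset> carrier G \<inter> \<Inter>(S - {U}) \<longleftrightarrow>
        (\<exists>g\<in>carrier G. (\<forall>Y\<in>S - {U}. g \<in> Y) \<and> g \<notin> U)" if "U \<in> S" for U
  proof -
    have eq: "carrier G \<inter> \<Inter>S = (carrier G \<inter> \<Inter>(S - {U})) \<inter> U"
      using that by blast
    have "A \<inter> U \<subset> A \<longleftrightarrow> (\<exists>g\<in>A. g \<notin> U)" for A by auto
    moreover have "(\<exists>g\<in>carrier G \<inter> \<Inter>(S - {U}). g \<notin> U) \<longleftrightarrow>
        (\<exists>g\<in>carrier G. (\<forall>Y\<in>S - {U}. g \<in> Y) \<and> g \<notin> U)" by blast
    ultimately show ?thesis unfolding eq by presburger
  qed
  then show ?thesis unfolding general_position_def by auto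
qed
lemma maxsub_subset: "maximal_subgroup M G \<Longrightarrow> M \<subseteq> carrier G"
  unfolding maximal_subgroup_def using subgroup.subset by blast

lemma maxdim_set_finite:
  assumes "finite (carrier G)"
  shows "finite {card S | S. S \<subseteq> {M. maximal_subgroup M G} \<and> general_position G S}"
proof (rule finite_subset)
  show "{card S | S. S \<subseteq> {M. maximal_subgroup M G} \<and> general_position G S}
        \<subseteq> card ` Pow (Pow (carrier G))"
  proof
    fix n assume "n \<in> {card S | S. S \<subseteq> {M. maximal_subgroup M G} \<and> general_position G S}"
    then obtain S where S: "n = card S" "S \<subseteq> {M. maximal_subgroup M G}" by auto
    have "S \<in> Pow (Pow (carrier G))" using S(2) maxsub_subset by fastforce
    then show "n \<in> card ` Pow (Pow (carrier G))" using S(1) by (rule rev_image_eqI)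
  qed
  show "finite (card ` Pow (Pow (carrier G)))" using assms by simp
qed

lemma maxdim_ge:
  assumes "finite (carrier G)" "S \<subseteq> {M. maximal_subgroup M G}" "general_position G S"
  shows "card S \<le> MaxDim G"
proof -
  have "card S \<in> {card S | S. S \<subseteq> {M. maximal_subgroup M G} \<and> general_position G S}"
    using assms(2,3) by auto
  then show ?thesis unfolding MaxDim_def
    by (rule Max_ge[OF maxdim_set_finite[OF assms(1)]])
qed

lemma maxdim_obtain:
  assumes "finite (carrier G)"
  obtains S where "S \<subseteq> {M. maximal_subgroup M G}" "general_position G S" "card S = MaxDim G"
proof -
  have "general_position G {}" unfolding general_position_def by auto
  then have "card {} \<in> {card S | S. S \<subseteq> {M. maximal_subgroup M G} \<and> general_position G S}"
    by (auto intro!: exI[of _ "{}"])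
  then have ne: "{card S | S. S \<subseteq> {M. maximal_subgroup M G} \<and> general_position G S} \<noteq> {}"
    by auto
  have "MaxDim G \<in> {card S | S. S \<subseteq> {M. maximal_subgroup M G} \<and> general_position G S}"
    unfolding MaxDim_def by (rule Max_in[OF maxdim_set_finite[OF assms] ne])
  then obtain S where "S \<subseteq> {M. maximal_subgroup M G}" "general_position G S" "card S = MaxDim G"
    by auto
  then show ?thesis using that by blast
qed

locale prodL =
  fixes H :: "('a, 'c) monoid_scheme" and K :: "('b, 'd) monoid_scheme" and L
  assumes gH: "group H" and gK: "group K" and sL: "subgroup L (H \<times>\<times> K)"
begin

lemma gG: "group (H \<times>\<times> K)" using DirProd_group gH gK by blast

lemma Lmem: "(a,b) \<in> L \<Longrightarrow> a \<in> carrier H \<and> b \<in> carrier K"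
  using subgroup.subset[OF sL] by auto

lemma Lmul: "(a,b) \<in> L \<Longrightarrow> (c,d) \<in> L \<Longrightarrow> (a \<otimes>\<^bsub>H\<^esub> c, b \<otimes>\<^bsub>K\<^esub> d) \<in> L"
  using subgroup.m_closed[OF sL, of "(a,b)" "(c,d)"] by simp

lemma Linv: "(a,b) \<in> L \<Longrightarrow> (inv\<^bsub>H\<^esub> a, inv\<^bsub>K\<^esub> b) \<in> L"
  using subgroup.m_inv_closed[OF sL, of "(a,b)"] Lmem[of a b] inv_DirProd[OF gH gK] by simp

lemma Lone: "(\<one>\<^bsub>H\<^esub>, \<one>\<^bsub>K\<^esub>) \<in> L"
  using subgroup.one_closed[OF sL] by simp

lemma gG2: "group (K \<times>\<times> H)" using DirProd_group gH gK by blast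

lemma swap_sub: "subgroup (prod.swap ` L) (K \<times>\<times> H)"
proof (rule group.subgroupI[OF gG2])
  show "prod.swap ` L \<subseteq> carrier (K \<times>\<times> H)" using Lmem by auto
  show "prod.swap ` L \<noteq> {}" using Lone by auto
next
  fix x assume "x \<in> prod.swap ` L"
  then obtain a b where "(a,b) \<in> L" "x = (b,a)" by auto
  then show "inv\<^bsub>K \<times>\<times> H\<^esub> x \<in> prod.swap ` L"
    using Linv[of a b] Lmem[of a b] inv_DirProd[OF gK gH] by force
next
  fix x y assume "x \<in> prod.swap ` L" "y \<in> prod.swap ` L"
  then obtain a b c d where "(a,b) \<in> L" "x = (b,a)" "(c,d) \<in> L" "y = (d,c)" by auto
  then show "x \<otimes>\<^bsub>K \<times>\<times> H\<^esub> y \<in> prod.swap ` L"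
    using Lmul[of a b c d] by force
qed

end

lemma swap_max:
  assumes "group H" "group K" "maximal_subgroup L (H \<times>\<times> K)"
  shows "maximal_subgroup (prod.swap ` L) (K \<times>\<times> H)"
proof -
  have sL: "subgroup L (H \<times>\<times> K)" using assms(3) unfolding maximal_subgroup_def by blast
  interpret prodL H K L by (rule prodL.intro[OF assms(1,2) sL])
  have ne: "L \<noteq> carrier (H \<times>\<times> K)" using assms(3) unfolding maximal_subgroup_def by blast
  have inv: "prod.swap ` prod.swap ` A = A" for A :: "('x \<times> 'y) set"
    by (simp add: image_image)
  show ?thesis unfolding maximal_subgroup_def
  proof (intro conjI allI impI)
    show "subgroup (prod.swap ` L) (K \<times>\<times> H)" by (rule swap_sub)
    show "prod.swap ` L \<noteq> carrier (K \<times>\<times> H)"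
    proof
      assume "prod.swap ` L = carrier (K \<times>\<times> H)"
      then have "prod.swap ` prod.swap ` L = prod.swap ` carrier (K \<times>\<times> H)" by simp
      then show False using ne inv[of L] by (simp add: product_swap)
    qed
  next
    fix Q assume Q: "subgroup Q (K \<times>\<times> H) \<and> prod.swap ` L \<subseteq> Q"
    interpret Q: prodL K H Q using Q by (intro prodL.intro[OF assms(2,1)]) auto
    have "subgroup (prod.swap ` Q) (H \<times>\<times> K)" by (rule Q.swap_sub)
    moreover have "L \<subseteq> prod.swap ` Q" using Q inv[of L] by (metis image_mono)
    ultimately have "prod.swap ` Q = L \<or> prod.swap ` Q = carrier (H \<times>\<times> K)"
      using assms(3) unfolding maximal_subgroup_def by blast
    then show "Q = prod.swap ` L \<or> Q = carrier (K \<times>\<times> H)"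
    proof
      assume "prod.swap ` Q = L" then show ?thesis using inv[of Q] by metis
    next
      assume "prod.swap ` Q = carrier (H \<times>\<times> K)"
      then have "prod.swap ` prod.swap ` Q = prod.swap ` carrier (H \<times>\<times> K)" by simp
      then show ?thesis using inv[of Q] by (simp add: product_swap)
    qed
  qed
qed



lemma max_prod1:
  assumes gH: "group H" and gK: "group K" and mM: "maximal_subgroup M H"
  shows "maximal_subgroup (M \<times> carrier K) (H \<times>\<times> K)"
proof -
  interpret H: group H by fact
  interpret K: group K by fact
  have sM: "subgroup M H" and neM: "M \<noteq> carrier H"
    and mx: "\<And>N. subgroup N H \<Longrightarrow> M \<subseteq> N \<Longrightarrow> N = M \<or> N = carrier H"
    using mM unfolding maximal_subgroup_def by blast+
  have oneK: "\<one>\<^bsub>K\<^esub> \<in> carrier K" by simp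
  have oneM: "\<one>\<^bsub>H\<^esub> \<in> M" using sM subgroup.one_closed by blast
  have sMK: "subgroup (M \<times> carrier K) (H \<times>\<times> K)"
    by (rule DirProd_subgroups[OF gH sM gK K.subgroup_self])
  show ?thesis unfolding maximal_subgroup_def
  proof (intro conjI allI impI)
    show "subgroup (M \<times> carrier K) (H \<times>\<times> K)" by (rule sMK)
    show "M \<times> carrier K \<noteq> carrier (H \<times>\<times> K)"
      using neM Times_eq_cancel2[OF oneK, of M "carrier H"] by simp
  next
    fix Q assume Q: "subgroup Q (H \<times>\<times> K) \<and> M \<times> carrier K \<subseteq> Q"
    interpret prodL H K Q using Q by (intro prodL.intro[OF gH gK]) auto
    define P where "P = {h. (h, \<one>\<^bsub>K\<^esub>) \<in> Q}"
    have full: "(h, k') \<in> Q" if "(h,k) \<in> Q" "k' \<in> carrier K" for h k k'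
    proof -
      have k: "k \<in> carrier K" and h: "h \<in> carrier H" using Lmem[OF that(1)] by auto
      have "(\<one>\<^bsub>H\<^esub>, inv\<^bsub>K\<^esub> k \<otimes>\<^bsub>K\<^esub> k') \<in> Q"
        using Q oneM k that(2) by auto
      from Lmul[OF that(1) this] show ?thesis
        using h k that(2) by (simp add: K.m_assoc[symmetric])
    qed
    have QP: "Q = P \<times> carrier K"
    proof
      show "Q \<subseteq> P \<times> carrier K"
      proof
        fix x assume "x \<in> Q"
        then obtain h k where x: "x = (h,k)" "(h,k) \<in> Q" by (cases x) auto
        then show "x \<in> P \<times> carrier K" using full[OF x(2) oneK] Lmem[OF x(2)]
          unfolding P_def by auto
      qed
      show "P \<times> carrier K \<subseteq> Q" unfolding P_def using full by auto
    qed
    have sP: "subgroup P H"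
    proof (rule H.subgroupI)
      show "P \<subseteq> carrier H" unfolding P_def using Lmem by auto
      show "P \<noteq> {}" unfolding P_def using Lone by auto
      fix a assume "a \<in> P"
      then show "inv\<^bsub>H\<^esub> a \<in> P" unfolding P_def using Linv[of a "\<one>\<^bsub>K\<^esub>"] by simp
    next
      fix a b assume "a \<in> P" "b \<in> P"
      then show "a \<otimes>\<^bsub>H\<^esub> b \<in> P" unfolding P_def using Lmul[of a "\<one>\<^bsub>K\<^esub>" b "\<one>\<^bsub>K\<^esub>"] by simp
    qed
    have "M \<subseteq> P" unfolding P_def using Q by auto
    then have "P = M \<or> P = carrier H" using mx[OF sP] by blast
    then show "Q = M \<times> carrier K \<or> Q = carrier (H \<times>\<times> K)" using QP by auto
  qed
qed

lemma max_prod2: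
  assumes gH: "group H" and gK: "group K" and mM: "maximal_subgroup M K"
  shows "maximal_subgroup (carrier H \<times> M) (H \<times>\<times> K)"
proof -
  have "maximal_subgroup (prod.swap ` (M \<times> carrier H)) (H \<times>\<times> K)"
    by (rule swap_max[OF gK gH max_prod1[OF gK gH mM]])
  then show ?thesis by (simp add: product_swap)
qed

lemma case1:
  assumes gH: "group H" and gK: "group K" and mL: "maximal_subgroup L (H \<times>\<times> K)"
    and nf: "fst ` L \<noteq> carrier H"
  shows "\<exists>M. maximal_subgroup M H \<and> L = M \<times> carrier K"
proof -
  interpret H: group H by fact
  interpret K: group K by fact
  have sL: "subgroup L (H \<times>\<times> K)" and neL: "L \<noteq> carrier (H \<times>\<times> K)"
    and mx: "\<And>N. subgroup N (H \<times>\<times> K) \<Longrightarrow> L \<subseteq> N \<Longrightarrow> N = L \<or> N = carrier (H \<times>\<times> K)"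
    using mL unfolding maximal_subgroup_def by blast+
  interpret prodL H K L by (rule prodL.intro[OF gH gK sL])
  have oneK: "\<one>\<^bsub>K\<^esub> \<in> carrier K" by simp
  define P where "P = fst ` L"
  have sP: "subgroup P H"
  proof (rule H.subgroupI)
    show "P \<subseteq> carrier H" unfolding P_def using Lmem by auto
    show "P \<noteq> {}" unfolding P_def using Lone by auto
    fix a assume "a \<in> P"
    then obtain b where "(a,b) \<in> L" unfolding P_def by auto
    then show "inv\<^bsub>H\<^esub> a \<in> P" unfolding P_def using Linv[of a b] by force
  next
    fix a c assume "a \<in> P" "c \<in> P"
    then obtain b d where "(a,b) \<in> L" "(c,d) \<in> L" unfolding P_def by auto
    then show "a \<otimes>\<^bsub>H\<^esub> c \<in> P" unfolding P_def using Lmul[of a b c d] by force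
  qed
  have LP: "L \<subseteq> P \<times> carrier K" unfolding P_def using Lmem by force
  have sPK: "subgroup (P \<times> carrier K) (H \<times>\<times> K)"
    by (rule DirProd_subgroups[OF gH sP gK K.subgroup_self])
  have "P \<times> carrier K \<noteq> carrier (H \<times>\<times> K)"
    using nf Times_eq_cancel2[OF oneK, of P "carrier H"] unfolding P_def by simp
  then have LeqP: "L = P \<times> carrier K" using mx[OF sPK LP] by auto
  have "maximal_subgroup P H" unfolding maximal_subgroup_def
  proof (intro conjI allI impI)
    show "subgroup P H" by (rule sP)
    show "P \<noteq> carrier H" using nf unfolding P_def .
  next
    fix Q assume Q: "subgroup Q H \<and> P \<subseteq> Q"
    have sQK: "subgroup (Q \<times> carrier K) (H \<times>\<times> K)"
      using DirProd_subgroups[OF gH _ gK K.subgroup_self] Q by blast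
    have "L \<subseteq> Q \<times> carrier K" using LeqP Q by auto
    then have "Q \<times> carrier K = L \<or> Q \<times> carrier K = carrier (H \<times>\<times> K)" using mx[OF sQK] by blast
    then show "Q = P \<or> Q = carrier H"
      using LeqP Times_eq_cancel2[OF oneK] by auto
  qed
  then show ?thesis using LeqP by blast
qed

lemma case2:
  assumes gH: "group H" and gK: "group K" and mL: "maximal_subgroup L (H \<times>\<times> K)"
    and nf: "snd ` L \<noteq> carrier K"
  shows "\<exists>M. maximal_subgroup M K \<and> L = carrier H \<times> M"
proof -
  have "fst ` prod.swap ` L \<noteq> carrier K" using nf by (simp add: image_image)
  then obtain M where M: "maximal_subgroup M K" "prod.swap ` L = M \<times> carrier H"
    using case1[OF gK gH swap_max[OF gH gK mL]] by blast
  then have "prod.swap ` prod.swap ` L = prod.swap ` (M \<times> carrier H)" by simp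
  then have "L = carrier H \<times> M" by (simp add: image_image product_swap)
  then show ?thesis using M by blast
qed



lemma side:
  assumes gH: "group H" and gK: "group K" and mL: "maximal_subgroup L (H \<times>\<times> K)"
    and fL: "fst ` L = carrier H" and sLs: "snd ` L = carrier K"
  shows "{h \<in> carrier H. (h, \<one>\<^bsub>K\<^esub>) \<in> L} \<lhd> H \<and> {h \<in> carrier H. (h, \<one>\<^bsub>K\<^esub>) \<in> L} \<noteq> carrier H \<and>
     (\<forall>A. A \<lhd> H \<and> {h \<in> carrier H. (h, \<one>\<^bsub>K\<^esub>) \<in> L} \<subseteq> A \<longrightarrow>
        A = {h \<in> carrier H. (h, \<one>\<^bsub>K\<^esub>) \<in> L} \<or> A = carrier H)"
proof -
  define N where "N = {h \<in> carrier H. (h, \<one>\<^bsub>K\<^esub>) \<in> L}"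
  interpret H: group H by fact
  interpret K: group K by fact
  interpret G: group "H \<times>\<times> K" using DirProd_group[OF gH gK] .
  have sL: "subgroup L (H \<times>\<times> K)" and neL: "L \<noteq> carrier (H \<times>\<times> K)"
    and mx: "\<And>N. subgroup N (H \<times>\<times> K) \<Longrightarrow> L \<subseteq> N \<Longrightarrow> N = L \<or> N = carrier (H \<times>\<times> K)"
    using mL unfolding maximal_subgroup_def by blast+
  interpret prodL H K L by (rule prodL.intro[OF gH gK sL])
  have getk: "\<exists>k. (h,k) \<in> L" if "h \<in> carrier H" for h
    using that fL by force
  have geth: "\<exists>h. (h,k) \<in> L" if "k \<in> carrier K" for k
    using that sLs by force
  have sN: "subgroup N H"
  proof (rule H.subgroupI)
    show "N \<subseteq> carrier H" unfolding N_def by auto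
    show "N \<noteq> {}" unfolding N_def using Lone by auto
    fix a assume "a \<in> N"
    then show "inv\<^bsub>H\<^esub> a \<in> N" unfolding N_def using Linv[of a "\<one>\<^bsub>K\<^esub>"] by simp
  next
    fix a b assume "a \<in> N" "b \<in> N"
    then show "a \<otimes>\<^bsub>H\<^esub> b \<in> N" unfolding N_def using Lmul[of a "\<one>\<^bsub>K\<^esub>" b "\<one>\<^bsub>K\<^esub>"] by simp
  qed
  have nN: "N \<lhd> H" unfolding H.normal_inv_iff
  proof (intro conjI ballI sN)
    fix x n assume x: "x \<in> carrier H" and n: "n \<in> N"
    obtain k where k: "(x,k) \<in> L" using getk[OF x] by blast
    have kK: "k \<in> carrier K" using Lmem[OF k] by simp
    have n1: "(n, \<one>\<^bsub>K\<^esub>) \<in> L" "n \<in> carrier H" using n unfolding N_def by auto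
    have "(x \<otimes>\<^bsub>H\<^esub> n \<otimes>\<^bsub>H\<^esub> inv\<^bsub>H\<^esub> x, k \<otimes>\<^bsub>K\<^esub> \<one>\<^bsub>K\<^esub> \<otimes>\<^bsub>K\<^esub> inv\<^bsub>K\<^esub> k) \<in> L"
      by (rule Lmul[OF Lmul[OF k n1(1)] Linv[OF k]])
    then show "x \<otimes>\<^bsub>H\<^esub> n \<otimes>\<^bsub>H\<^esub> inv\<^bsub>H\<^esub> x \<in> N" unfolding N_def using kK x n1 by simp
  qed
  have neN: "N \<noteq> carrier H"
  proof
    assume NH: "N = carrier H"
    have "carrier (H \<times>\<times> K) \<subseteq> L"
    proof
      fix x assume "x \<in> carrier (H \<times>\<times> K)"
      then obtain h k where x: "x = (h,k)" "h \<in> carrier H" "k \<in> carrier K" by auto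
      obtain h0 where h0: "(h0,k) \<in> L" using geth[OF x(3)] by blast
      have h0H: "h0 \<in> carrier H" using Lmem[OF h0] by simp
      have "h \<otimes>\<^bsub>H\<^esub> inv\<^bsub>H\<^esub> h0 \<in> N" using NH x h0H by simp
      then have "(h \<otimes>\<^bsub>H\<^esub> inv\<^bsub>H\<^esub> h0, \<one>\<^bsub>K\<^esub>) \<in> L" unfolding N_def by simp
      from Lmul[OF this h0] show "x \<in> L" using x h0H by (simp add: H.m_assoc)
    qed
    then show False using neL subgroup.subset[OF sL] by blast
  qed
  have dich: "A = N \<or> A = carrier H" if nA: "A \<lhd> H" and NA: "N \<subseteq> A" for A
  proof -
    have sA: "subgroup A H" using nA normal_imp_subgroup by blast
    have AH: "A \<subseteq> carrier H" using sA subgroup.subset by blast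
    have nA1: "(A \<times> {\<one>\<^bsub>K\<^esub>}) \<lhd> (H \<times>\<times> K)" unfolding G.normal_inv_iff
    proof (intro conjI ballI)
      show "subgroup (A \<times> {\<one>\<^bsub>K\<^esub>}) (H \<times>\<times> K)"
        by (rule DirProd_subgroups[OF gH sA gK K.triv_subgroup])
      fix x y assume x: "x \<in> carrier (H \<times>\<times> K)" and y: "y \<in> A \<times> {\<one>\<^bsub>K\<^esub>}"
      obtain x1 x2 where xx: "x = (x1,x2)" "x1 \<in> carrier H" "x2 \<in> carrier K" using x by auto
      obtain a where yy: "y = (a, \<one>\<^bsub>K\<^esub>)" "a \<in> A" using y by auto
      have "x1 \<otimes>\<^bsub>H\<^esub> a \<otimes>\<^bsub>H\<^esub> inv\<^bsub>H\<^esub> x1 \<in> A" using nA xx yy H.normal_inv_iff by blast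
      then show "x \<otimes>\<^bsub>H \<times>\<times> K\<^esub> y \<otimes>\<^bsub>H \<times>\<times> K\<^esub> inv\<^bsub>H \<times>\<times> K\<^esub> x \<in> A \<times> {\<one>\<^bsub>K\<^esub>}"
        using xx yy inv_DirProd[OF gH gK] by simp
    qed
    define T where "T = (A \<times> {\<one>\<^bsub>K\<^esub>}) <#>\<^bsub>H \<times>\<times> K\<^esub> L"
    have sT: "subgroup T (H \<times>\<times> K)" unfolding T_def by (rule G.mult_norm_subgroup[OF nA1 sL])
    have memT: "(a \<otimes>\<^bsub>H\<^esub> h, \<one>\<^bsub>K\<^esub> \<otimes>\<^bsub>K\<^esub> k) \<in> T" if "a \<in> A" "(h,k) \<in> L" for a h k
      unfolding T_def set_mult_def using that by force
    have memT': "\<exists>a h' k'. a \<in> A \<and> (h',k') \<in> L \<and> x = (a \<otimes>\<^bsub>H\<^esub> h', \<one>\<^bsub>K\<^esub> \<otimes>\<^bsub>K\<^esub> k')" if "x \<in> T" for x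
      using that unfolding T_def set_mult_def by force
    have "L \<subseteq> T"
    proof
      fix x assume "x \<in> L"
      then obtain h k where hk: "x = (h,k)" "(h,k) \<in> L" by (cases x) auto
      have "\<one>\<^bsub>H\<^esub> \<in> A" using sA subgroup.one_closed by blast
      from memT[OF this hk(2)] show "x \<in> T" using hk Lmem[OF hk(2)] by simp
    qed
    then have "T = L \<or> T = carrier (H \<times>\<times> K)" using mx[OF sT] by blast
    then show ?thesis
    proof
      assume TL: "T = L"
      have "A \<subseteq> N"
      proof
        fix a assume a: "a \<in> A"
        from memT[OF a Lone] have "(a, \<one>\<^bsub>K\<^esub>) \<in> L" using TL a AH by auto
        then show "a \<in> N" unfolding N_def using a AH by auto
      qed
      then show ?thesis using NA by blast
    next
      assume TG: "T = carrier (H \<times>\<times> K)"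
      have "carrier H \<subseteq> A"
      proof
        fix h assume h: "h \<in> carrier H"
        obtain k where k: "(h,k) \<in> L" using getk[OF h] by blast
        have kK: "k \<in> carrier K" using Lmem[OF k] by simp
        have "(\<one>\<^bsub>H\<^esub>, k) \<in> T" using TG kK by simp
        then obtain a h' k' where a: "a \<in> A" "(h',k') \<in> L" "(\<one>\<^bsub>H\<^esub>, k) = (a \<otimes>\<^bsub>H\<^esub> h', \<one>\<^bsub>K\<^esub> \<otimes>\<^bsub>K\<^esub> k')"
          using memT' by blast
        have h'H: "h' \<in> carrier H" and k'K: "k' \<in> carrier K" using Lmem[OF a(2)] by auto
        have aH: "a \<in> carrier H" using a(1) AH by blast
        have kk: "k' = k" using a(3) k'K by simp
        have "a \<otimes>\<^bsub>H\<^esub> h' = \<one>\<^bsub>H\<^esub>" using a(3) by simp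
        then have "inv\<^bsub>H\<^esub> h' = a" using aH h'H by (intro H.inv_equality) auto
        then have "inv\<^bsub>H\<^esub> (inv\<^bsub>H\<^esub> h') \<in> A" using a(1) sA subgroup.m_inv_closed by metis
        then have h'A: "h' \<in> A" using h'H by simp
        have "(h \<otimes>\<^bsub>H\<^esub> inv\<^bsub>H\<^esub> h', k \<otimes>\<^bsub>K\<^esub> inv\<^bsub>K\<^esub> k) \<in> L"
          using Lmul[OF k Linv[OF a(2)]] kk by simp
        then have "h \<otimes>\<^bsub>H\<^esub> inv\<^bsub>H\<^esub> h' \<in> N" unfolding N_def using kK h h'H by simp
        then have "h \<otimes>\<^bsub>H\<^esub> inv\<^bsub>H\<^esub> h' \<in> A" using NA by blast
        then have "h \<otimes>\<^bsub>H\<^esub> inv\<^bsub>H\<^esub> h' \<otimes>\<^bsub>H\<^esub> h' \<in> A" by (rule subgroup.m_closed[OF sA _ h'A])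
        then show "h \<in> A" using h h'H by (simp add: H.m_assoc)
      qed
      then show ?thesis using AH by blast
    qed
  qed
  have "N \<lhd> H \<and> N \<noteq> carrier H \<and> (\<forall>A. A \<lhd> H \<and> N \<subseteq> A \<longrightarrow> A = N \<or> A = carrier H)"
    using nN neN dich by blast
  then show ?thesis unfolding N_def .
qed



lemma maxN:
  assumes gH: "group H" and nN: "N \<lhd> H" and neN: "N \<noteq> carrier H"
    and dich: "\<forall>A. A \<lhd> H \<and> N \<subseteq> A \<longrightarrow> A = N \<or> A = carrier H"
    and cm: "\<forall>g\<in>carrier H. \<forall>h\<in>carrier H. g \<otimes>\<^bsub>H\<^esub> h \<otimes>\<^bsub>H\<^esub> inv\<^bsub>H\<^esub> (h \<otimes>\<^bsub>H\<^esub> g) \<in> N"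
  shows "maximal_subgroup N H"
  unfolding maximal_subgroup_def
proof (intro conjI allI impI)
  interpret H: group H by fact
  show "subgroup N H" using nN normal_imp_subgroup by blast
  show "N \<noteq> carrier H" by fact
  fix Q assume Q: "subgroup Q H \<and> N \<subseteq> Q"
  have sQ: "subgroup Q H" using Q by blast
  have "Q \<lhd> H" unfolding H.normal_inv_iff
  proof (intro conjI ballI sQ)
    fix x q assume x: "x \<in> carrier H" and q: "q \<in> Q"
    have qH: "q \<in> carrier H" using q sQ subgroup.subset by blast
    have "x \<otimes>\<^bsub>H\<^esub> q \<otimes>\<^bsub>H\<^esub> inv\<^bsub>H\<^esub> (q \<otimes>\<^bsub>H\<^esub> x) \<in> N" using cm x qH by blast
    then have "x \<otimes>\<^bsub>H\<^esub> q \<otimes>\<^bsub>H\<^esub> inv\<^bsub>H\<^esub> (q \<otimes>\<^bsub>H\<^esub> x) \<in> Q" using Q by blast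
    then have "x \<otimes>\<^bsub>H\<^esub> q \<otimes>\<^bsub>H\<^esub> inv\<^bsub>H\<^esub> (q \<otimes>\<^bsub>H\<^esub> x) \<otimes>\<^bsub>H\<^esub> q \<in> Q"
      by (rule subgroup.m_closed[OF sQ _ q])
    moreover have "x \<otimes>\<^bsub>H\<^esub> q \<otimes>\<^bsub>H\<^esub> inv\<^bsub>H\<^esub> (q \<otimes>\<^bsub>H\<^esub> x) \<otimes>\<^bsub>H\<^esub> q = x \<otimes>\<^bsub>H\<^esub> q \<otimes>\<^bsub>H\<^esub> inv\<^bsub>H\<^esub> x"
      using x qH by (simp add: H.inv_mult_group H.m_assoc)
    ultimately show "x \<otimes>\<^bsub>H\<^esub> q \<otimes>\<^bsub>H\<^esub> inv\<^bsub>H\<^esub> x \<in> Q" by simp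
  qed
  then show "Q = N \<or> Q = carrier H" using dich Q by blast
qed

lemma simpleQ:
  assumes gH: "group H" and fin: "finite (carrier H)" and nN: "N \<lhd> H" and neN: "N \<noteq> carrier H"
    and dich: "\<forall>A. A \<lhd> H \<and> N \<subseteq> A \<longrightarrow> A = N \<or> A = carrier H"
  shows "simple_group (H Mod N)"
proof -
  interpret H: group H by fact
  interpret N: normal N H by (rule nN)
  have gQ: "group (H Mod N)" by (rule N.factorgroup_is_group)
  have NH: "N \<subseteq> carrier H" using N.subset .
  show ?thesis unfolding simple_group_def simple_group_axioms_def
  proof (intro conjI allI impI gQ)
    obtain h where h: "h \<in> carrier H" "h \<notin> N" using neN NH by blast
    have c1: "N \<in> carrier (H Mod N)"
      unfolding carrier_FactGroup using H.coset_mult_one[OF NH] by (metis H.one_closed image_eqI)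
    have c2: "N #>\<^bsub>H\<^esub> h \<in> carrier (H Mod N)" unfolding carrier_FactGroup using h by blast
    have "h \<in> N #>\<^bsub>H\<^esub> h" by (rule H.rcos_self[OF h(1) N.subgroup_axioms])
    then have ne: "N #>\<^bsub>H\<^esub> h \<noteq> N" using h by blast
    have fQ: "finite (carrier (H Mod N))" unfolding carrier_FactGroup using fin by simp
    have "card {N, N #>\<^bsub>H\<^esub> h} \<le> card (carrier (H Mod N))"
      by (rule card_mono[OF fQ]) (use c1 c2 in blast)
    moreover have "card {N, N #>\<^bsub>H\<^esub> h} = 2" using ne by simp
    ultimately show "1 < order (H Mod N)" unfolding order_def by simp
  next
    fix W assume W: "W \<lhd> H Mod N"
    have nU: "\<Union>W \<lhd> H" by (rule N.factgroup_subgroup_union_normal[OF W])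
    have sW: "subgroup W (H Mod N)" using W normal_imp_subgroup by blast
    have "\<one>\<^bsub>H Mod N\<^esub> \<in> W" by (rule subgroup.one_closed[OF sW])
    then have NW: "N \<in> W" by simp
    then have "N \<subseteq> \<Union>W" by blast
    then have cs: "\<Union>W = N \<or> \<Union>W = carrier H" using dich nU by blast
    have Weq: "W = rcosets\<^bsub>H\<lparr>carrier := \<Union>W\<rparr>\<^esub> N"
      by (rule N.factgroup_subgroup_union_factor[OF sW])
    have rc: "r_coset (H\<lparr>carrier := C\<rparr>) N a = N #>\<^bsub>H\<^esub> a" for C a
      by (simp add: r_coset_def)
    from cs show "W = carrier (H Mod N) \<or> W = {\<one>\<^bsub>H Mod N\<^esub>}"
    proof
      assume U: "\<Union>W = N"
      have "rcosets\<^bsub>H\<lparr>carrier := N\<rparr>\<^esub> N = (\<Union>a\<in>N. {N #>\<^bsub>H\<^esub> a})"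
        unfolding RCOSETS_def rc by simp
      also have "\<dots> = (\<Union>a\<in>N. {N})"
        using H.coset_join2[OF _ N.subgroup_axioms] NH by blast
      also have "\<dots> = {N}" using N.one_closed by blast
      finally show ?thesis using Weq U by simp
    next
      assume U: "\<Union>W = carrier H"
      have "rcosets\<^bsub>H\<lparr>carrier := carrier H\<rparr>\<^esub> N = rcosets\<^bsub>H\<^esub> N"
        unfolding RCOSETS_def rc by simp
      then show ?thesis using Weq U unfolding FactGroup_def by simp
    qed
  qed
qed

lemma commN:
  assumes gH: "group H" and nN: "N \<lhd> H" and cQ: "comm_group (H Mod N)"
  shows "\<forall>g\<in>carrier H. \<forall>h\<in>carrier H. g \<otimes>\<^bsub>H\<^esub> h \<otimes>\<^bsub>H\<^esub> inv\<^bsub>H\<^esub> (h \<otimes>\<^bsub>H\<^esub> g) \<in> N"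
proof (intro ballI)
  interpret H: group H by fact
  interpret N: normal N H by (rule nN)
  interpret Q: comm_group "H Mod N" by (rule cQ)
  fix g h assume g: "g \<in> carrier H" and h: "h \<in> carrier H"
  have cg: "N #>\<^bsub>H\<^esub> g \<in> carrier (H Mod N)" unfolding carrier_FactGroup using g by blast
  have ch: "N #>\<^bsub>H\<^esub> h \<in> carrier (H Mod N)" unfolding carrier_FactGroup using h by blast
  have "(N #>\<^bsub>H\<^esub> g) \<otimes>\<^bsub>H Mod N\<^esub> (N #>\<^bsub>H\<^esub> h) = (N #>\<^bsub>H\<^esub> h) \<otimes>\<^bsub>H Mod N\<^esub> (N #>\<^bsub>H\<^esub> g)"
    by (rule Q.m_comm[OF cg ch])
  then have eq: "N #>\<^bsub>H\<^esub> (g \<otimes>\<^bsub>H\<^esub> h) = N #>\<^bsub>H\<^esub> (h \<otimes>\<^bsub>H\<^esub> g)"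
    using N.rcos_sum g h by simp
  have "g \<otimes>\<^bsub>H\<^esub> h \<in> N #>\<^bsub>H\<^esub> (g \<otimes>\<^bsub>H\<^esub> h)"
    using H.rcos_self[OF _ N.subgroup_axioms] g h by simp
  then have "g \<otimes>\<^bsub>H\<^esub> h \<in> N #>\<^bsub>H\<^esub> (h \<otimes>\<^bsub>H\<^esub> g)" using eq by simp
  then show "g \<otimes>\<^bsub>H\<^esub> h \<otimes>\<^bsub>H\<^esub> inv\<^bsub>H\<^esub> (h \<otimes>\<^bsub>H\<^esub> g) \<in> N"
    using N.rcos_module_imp[OF gH] g h by simp
qed



lemma FactGroup_elemE:
  assumes "U \<in> carrier (G Mod N)"
  obtains h where "h \<in> carrier G" "U = N #>\<^bsub>G\<^esub> h"
  using assms unfolding carrier_FactGroup by auto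

lemma isoQ:
  assumes gH: "group H" and gK: "group K" and sL: "subgroup L (H \<times>\<times> K)"
    and fL: "fst ` L = carrier H" and sLs: "snd ` L = carrier K"
    and nN: "{h \<in> carrier H. (h, \<one>\<^bsub>K\<^esub>) \<in> L} \<lhd> H"
    and nN': "{k \<in> carrier K. (\<one>\<^bsub>H\<^esub>, k) \<in> L} \<lhd> K"
  shows "(H Mod {h \<in> carrier H. (h, \<one>\<^bsub>K\<^esub>) \<in> L}) \<cong> (K Mod {k \<in> carrier K. (\<one>\<^bsub>H\<^esub>, k) \<in> L})"
proof -
  define N where "N = {h \<in> carrier H. (h, \<one>\<^bsub>K\<^esub>) \<in> L}"
  define N' where "N' = {k \<in> carrier K. (\<one>\<^bsub>H\<^esub>, k) \<in> L}"
  interpret H: group H by fact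
  interpret K: group K by fact
  interpret prodL H K L by (rule prodL.intro[OF gH gK sL])
  interpret N: normal N H using nN unfolding N_def .
  interpret N': normal N' K using nN' unfolding N'_def .
  have getk: "\<exists>k. (h,k) \<in> L" if "h \<in> carrier H" for h
    using that fL by force
  have geth: "\<exists>h. (h,k) \<in> L" if "k \<in> carrier K" for k
    using that sLs by force
  define phi where "phi = (\<lambda>U. {k \<in> carrier K. \<exists>h\<in>U. (h,k) \<in> L})"
  have key: "phi (N #>\<^bsub>H\<^esub> h) = N' #>\<^bsub>K\<^esub> k0" if hk: "(h,k0) \<in> L" for h k0
  proof
    have hH: "h \<in> carrier H" and k0K: "k0 \<in> carrier K" using Lmem[OF hk] by auto
    show "phi (N #>\<^bsub>H\<^esub> h) \<subseteq> N' #>\<^bsub>K\<^esub> k0"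
    proof
      fix k assume "k \<in> phi (N #>\<^bsub>H\<^esub> h)"
      then obtain h1 where k: "k \<in> carrier K" and h1: "h1 \<in> N #>\<^bsub>H\<^esub> h" "(h1,k) \<in> L"
        unfolding phi_def by blast
      obtain n where n: "n \<in> N" "h1 = n \<otimes>\<^bsub>H\<^esub> h" using h1(1) unfolding r_coset_def by blast
      have nH: "n \<in> carrier H" and n1: "(n, \<one>\<^bsub>K\<^esub>) \<in> L" using n(1) unfolding N_def by auto
      have "(inv\<^bsub>H\<^esub> n \<otimes>\<^bsub>H\<^esub> h1, inv\<^bsub>K\<^esub> \<one>\<^bsub>K\<^esub> \<otimes>\<^bsub>K\<^esub> k) \<in> L"
        by (rule Lmul[OF Linv[OF n1] h1(2)])
      then have "(h, k) \<in> L" using n(2) nH hH k by (simp add: H.m_assoc[symmetric])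
      from Lmul[OF this Linv[OF hk]] have "(\<one>\<^bsub>H\<^esub>, k \<otimes>\<^bsub>K\<^esub> inv\<^bsub>K\<^esub> k0) \<in> L"
        using hH by simp
      then have "k \<otimes>\<^bsub>K\<^esub> inv\<^bsub>K\<^esub> k0 \<in> N'" unfolding N'_def using k k0K by simp
      then show "k \<in> N' #>\<^bsub>K\<^esub> k0" using N'.rcos_module_rev[OF gK k0K k] by simp
    qed
    show "N' #>\<^bsub>K\<^esub> k0 \<subseteq> phi (N #>\<^bsub>H\<^esub> h)"
    proof
      fix k assume "k \<in> N' #>\<^bsub>K\<^esub> k0"
      then obtain n' where n': "n' \<in> N'" "k = n' \<otimes>\<^bsub>K\<^esub> k0" unfolding r_coset_def by blast
      have n'K: "n' \<in> carrier K" and n1: "(\<one>\<^bsub>H\<^esub>, n') \<in> L" using n'(1) unfolding N'_def by auto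
      have "(\<one>\<^bsub>H\<^esub> \<otimes>\<^bsub>H\<^esub> h, n' \<otimes>\<^bsub>K\<^esub> k0) \<in> L" by (rule Lmul[OF n1 hk])
      then have hk': "(h, k) \<in> L" using hH n' by simp
      have hN: "h \<in> N #>\<^bsub>H\<^esub> h" by (rule H.rcos_self[OF hH N.subgroup_axioms])
      have kK: "k \<in> carrier K" using n'(2) n'K k0K by simp
      show "k \<in> phi (N #>\<^bsub>H\<^esub> h)" unfolding phi_def mem_Collect_eq
        using kK hk' hN by (intro conjI bexI[of _ h]) assumption+
    qed
  qed
  have into: "phi U \<in> carrier (K Mod N')" if U: "U \<in> carrier (H Mod N)" for U
  proof -
    obtain h where h: "h \<in> carrier H" "U = N #>\<^bsub>H\<^esub> h" using U by (rule FactGroup_elemE)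
    obtain k where k: "(h,k) \<in> L" using getk[OF h(1)] by blast
    have "k \<in> carrier K" using Lmem[OF k] by simp
    then show ?thesis using key[OF k] h(2) unfolding carrier_FactGroup by blast
  qed
  have hom: "phi \<in> hom (H Mod N) (K Mod N')"
    unfolding hom_def
  proof (intro CollectI conjI ballI)
    show "phi \<in> carrier (H Mod N) \<rightarrow> carrier (K Mod N')" using into by blast
    fix U V assume U: "U \<in> carrier (H Mod N)" and V: "V \<in> carrier (H Mod N)"
    obtain h where h: "h \<in> carrier H" "U = N #>\<^bsub>H\<^esub> h" using U by (rule FactGroup_elemE)
    obtain h' where h': "h' \<in> carrier H" "V = N #>\<^bsub>H\<^esub> h'" using V by (rule FactGroup_elemE)
    obtain k where k: "(h,k) \<in> L" using getk[OF h(1)] by blast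
    obtain k' where k': "(h',k') \<in> L" using getk[OF h'(1)] by blast
    have kK: "k \<in> carrier K" "k' \<in> carrier K" using Lmem[OF k] Lmem[OF k'] by auto
    have "U \<otimes>\<^bsub>H Mod N\<^esub> V = N #>\<^bsub>H\<^esub> (h \<otimes>\<^bsub>H\<^esub> h')" using h h' N.rcos_sum by simp
    then have "phi (U \<otimes>\<^bsub>H Mod N\<^esub> V) = N' #>\<^bsub>K\<^esub> (k \<otimes>\<^bsub>K\<^esub> k')" using key[OF Lmul[OF k k']] by simp
    also have "\<dots> = (N' #>\<^bsub>K\<^esub> k) <#>\<^bsub>K\<^esub> (N' #>\<^bsub>K\<^esub> k')" using N'.rcos_sum kK by simp
    also have "\<dots> = phi U \<otimes>\<^bsub>K Mod N'\<^esub> phi V" using key[OF k] key[OF k'] h h' by simp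
    finally show "phi (U \<otimes>\<^bsub>H Mod N\<^esub> V) = phi U \<otimes>\<^bsub>K Mod N'\<^esub> phi V" .
  qed
  have inj: "inj_on phi (carrier (H Mod N))"
  proof (rule inj_onI)
    fix U V assume U: "U \<in> carrier (H Mod N)" and V: "V \<in> carrier (H Mod N)" and eq: "phi U = phi V"
    obtain h1 where h1: "h1 \<in> carrier H" "U = N #>\<^bsub>H\<^esub> h1" using U by (rule FactGroup_elemE)
    obtain h2 where h2: "h2 \<in> carrier H" "V = N #>\<^bsub>H\<^esub> h2" using V by (rule FactGroup_elemE)
    obtain k1 where k1: "(h1,k1) \<in> L" using getk[OF h1(1)] by blast
    obtain k2 where k2: "(h2,k2) \<in> L" using getk[OF h2(1)] by blast
    have kK: "k1 \<in> carrier K" "k2 \<in> carrier K" using Lmem[OF k1] Lmem[OF k2] by auto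
    have "N' #>\<^bsub>K\<^esub> k1 = N' #>\<^bsub>K\<^esub> k2" using eq key[OF k1] key[OF k2] h1 h2 by simp
    moreover have "k1 \<in> N' #>\<^bsub>K\<^esub> k1" by (rule K.rcos_self[OF kK(1) N'.subgroup_axioms])
    ultimately have "k1 \<in> N' #>\<^bsub>K\<^esub> k2" by simp
    then have c: "k1 \<otimes>\<^bsub>K\<^esub> inv\<^bsub>K\<^esub> k2 \<in> N'" using N'.rcos_module_imp[OF gK kK(2)] by simp
    then have c1: "(\<one>\<^bsub>H\<^esub>, k1 \<otimes>\<^bsub>K\<^esub> inv\<^bsub>K\<^esub> k2) \<in> L" unfolding N'_def by simp
    have "(h1 \<otimes>\<^bsub>H\<^esub> inv\<^bsub>H\<^esub> h2 \<otimes>\<^bsub>H\<^esub> inv\<^bsub>H\<^esub> \<one>\<^bsub>H\<^esub>,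
           k1 \<otimes>\<^bsub>K\<^esub> inv\<^bsub>K\<^esub> k2 \<otimes>\<^bsub>K\<^esub> inv\<^bsub>K\<^esub> (k1 \<otimes>\<^bsub>K\<^esub> inv\<^bsub>K\<^esub> k2)) \<in> L"
      by (rule Lmul[OF Lmul[OF k1 Linv[OF k2]] Linv[OF c1]])
    then have "(h1 \<otimes>\<^bsub>H\<^esub> inv\<^bsub>H\<^esub> h2, \<one>\<^bsub>K\<^esub>) \<in> L" using h1 h2 kK by simp
    then have "h1 \<otimes>\<^bsub>H\<^esub> inv\<^bsub>H\<^esub> h2 \<in> N" unfolding N_def using h1 h2 by simp
    then have "h1 \<in> N #>\<^bsub>H\<^esub> h2" using N.rcos_module_rev[OF gH h2(1) h1(1)] by simp
    then have "N #>\<^bsub>H\<^esub> h2 = N #>\<^bsub>H\<^esub> h1" by (rule H.repr_independence[OF _ h2(1) N.subgroup_axioms])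
    then show "U = V" using h1 h2 by simp
  qed
  have surj: "phi ` carrier (H Mod N) = carrier (K Mod N')"
  proof
    show "phi ` carrier (H Mod N) \<subseteq> carrier (K Mod N')" using into by blast
    show "carrier (K Mod N') \<subseteq> phi ` carrier (H Mod N)"
    proof
      fix V assume "V \<in> carrier (K Mod N')"
      then obtain k where k: "k \<in> carrier K" "V = N' #>\<^bsub>K\<^esub> k" unfolding carrier_FactGroup by blast
      obtain h where h: "(h,k) \<in> L" using geth[OF k(1)] by blast
      have "h \<in> carrier H" using Lmem[OF h] by simp
      then have "N #>\<^bsub>H\<^esub> h \<in> carrier (H Mod N)" unfolding carrier_FactGroup by blast
      then show "V \<in> phi ` carrier (H Mod N)" using key[OF h] k(2) by (metis image_eqI)
    qed
  qed
  have "phi \<in> iso (H Mod N) (K Mod N')"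
    unfolding iso_def bij_betw_def using hom inj surj by blast
  then show ?thesis unfolding is_iso_def N_def N'_def by blast
qed

lemma commK:
  assumes gH: "group H" and gK: "group K" and sL: "subgroup L (H \<times>\<times> K)"
    and fL: "fst ` L = carrier H" and sLs: "snd ` L = carrier K"
    and cm: "\<forall>g\<in>carrier H. \<forall>h\<in>carrier H. g \<otimes>\<^bsub>H\<^esub> h \<otimes>\<^bsub>H\<^esub> inv\<^bsub>H\<^esub> (h \<otimes>\<^bsub>H\<^esub> g) \<in> {h \<in> carrier H. (h, \<one>\<^bsub>K\<^esub>) \<in> L}"
  shows "\<forall>g\<in>carrier K. \<forall>h\<in>carrier K. g \<otimes>\<^bsub>K\<^esub> h \<otimes>\<^bsub>K\<^esub> inv\<^bsub>K\<^esub> (h \<otimes>\<^bsub>K\<^esub> g) \<in> {k \<in> carrier K. (\<one>\<^bsub>H\<^esub>, k) \<in> L}"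
proof (intro ballI)
  interpret H: group H by fact
  interpret K: group K by fact
  interpret prodL H K L by (rule prodL.intro[OF gH gK sL])
  fix k1 k2 assume k1: "k1 \<in> carrier K" and k2: "k2 \<in> carrier K"
  obtain h1 where h1: "(h1,k1) \<in> L" using k1 sLs by force
  obtain h2 where h2: "(h2,k2) \<in> L" using k2 sLs by force
  have hH: "h1 \<in> carrier H" "h2 \<in> carrier H" using Lmem[OF h1] Lmem[OF h2] by auto
  define c where "c = h1 \<otimes>\<^bsub>H\<^esub> h2 \<otimes>\<^bsub>H\<^esub> inv\<^bsub>H\<^esub> (h2 \<otimes>\<^bsub>H\<^esub> h1)"
  define d where "d = k1 \<otimes>\<^bsub>K\<^esub> k2 \<otimes>\<^bsub>K\<^esub> inv\<^bsub>K\<^esub> (k2 \<otimes>\<^bsub>K\<^esub> k1)"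
  have cH: "c \<in> carrier H" unfolding c_def using hH by simp
  have dK: "d \<in> carrier K" unfolding d_def using k1 k2 by simp
  have cd: "(c, d) \<in> L" unfolding c_def d_def
    by (rule Lmul[OF Lmul[OF h1 h2] Linv[OF Lmul[OF h2 h1]]])
  have "(c, \<one>\<^bsub>K\<^esub>) \<in> L" using cm hH unfolding c_def by blast
  from Lmul[OF Linv[OF this] cd] have "(\<one>\<^bsub>H\<^esub>, d) \<in> L" using cH dK by simp
  then show "k1 \<otimes>\<^bsub>K\<^esub> k2 \<otimes>\<^bsub>K\<^esub> inv\<^bsub>K\<^esub> (k2 \<otimes>\<^bsub>K\<^esub> k1) \<in> {k \<in> carrier K. (\<one>\<^bsub>H\<^esub>, k) \<in> L}"
    using dK unfolding d_def by simp
qed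



definition pform :: "('a, 'c) monoid_scheme \<Rightarrow> ('b, 'd) monoid_scheme \<Rightarrow> ('a \<times> 'b) set \<Rightarrow> bool" where
  "pform H K U \<longleftrightarrow> (\<exists>M. maximal_subgroup M H \<and> U = M \<times> carrier K) \<or>
                    (\<exists>M. maximal_subgroup M K \<and> U = carrier H \<times> M)"

lemma swap_mem: "(a,b) \<in> prod.swap ` L \<longleftrightarrow> (b,a) \<in> L"
  by force

lemma classify:
  assumes gH: "group H" and gK: "group K" and fin: "finite (carrier H)"
    and hyp: "\<not> (\<exists>N M. N \<lhd> H \<and> M \<lhd> K \<and> simple_group (H Mod N) \<and>
                   \<not> comm_group (H Mod N) \<and> (H Mod N) \<cong> (K Mod M))"
    and mL: "maximal_subgroup L (H \<times>\<times> K)"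
  shows "pform H K L \<or> (\<exists>N N'. N \<lhd> H \<and> maximal_subgroup N H \<and> N' \<lhd> K \<and>
            maximal_subgroup N' K \<and> N \<times> N' \<subseteq> L)"
proof (cases "fst ` L = carrier H")
  case False
  then show ?thesis using case1[OF gH gK mL] unfolding pform_def by blast
next
  case fL: True
  show ?thesis
  proof (cases "snd ` L = carrier K")
    case False
    then show ?thesis using case2[OF gH gK mL] unfolding pform_def by blast
  next
    case sLs: True
    have sL: "subgroup L (H \<times>\<times> K)" using mL unfolding maximal_subgroup_def by blast
    interpret prodL H K L by (rule prodL.intro[OF gH gK sL])
    define N where "N = {h \<in> carrier H. (h, \<one>\<^bsub>K\<^esub>) \<in> L}"
    define N' where "N' = {k \<in> carrier K. (\<one>\<^bsub>H\<^esub>, k) \<in> L}"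
    have sd: "N \<lhd> H \<and> N \<noteq> carrier H \<and> (\<forall>A. A \<lhd> H \<and> N \<subseteq> A \<longrightarrow> A = N \<or> A = carrier H)"
      using side[OF gH gK mL fL sLs] unfolding N_def .
    have mL': "maximal_subgroup (prod.swap ` L) (K \<times>\<times> H)" by (rule swap_max[OF gH gK mL])
    have fL': "fst ` prod.swap ` L = carrier K" using sLs by (simp add: image_image)
    have sLs': "snd ` prod.swap ` L = carrier H" using fL by (simp add: image_image)
    have eqN': "{k \<in> carrier K. (k, \<one>\<^bsub>H\<^esub>) \<in> prod.swap ` L} = N'"
      unfolding N'_def swap_mem ..
    have sd': "N' \<lhd> K \<and> N' \<noteq> carrier K \<and> (\<forall>A. A \<lhd> K \<and> N' \<subseteq> A \<longrightarrow> A = N' \<or> A = carrier K)"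
      using side[OF gK gH mL' fL' sLs'] unfolding eqN' .
    have nN: "N \<lhd> H" and nN': "N' \<lhd> K" using sd sd' by blast+
    have simp: "simple_group (H Mod N)"
      using simpleQ[OF gH fin nN] sd by blast
    have iso: "(H Mod N) \<cong> (K Mod N')"
      using isoQ[OF gH gK sL fL sLs] nN nN' unfolding N_def N'_def by blast
    have cQ: "comm_group (H Mod N)"
    proof (rule ccontr)
      assume "\<not> comm_group (H Mod N)"
      then show False using hyp nN nN' simp iso by blast
    qed
    have cmN: "\<forall>g\<in>carrier H. \<forall>h\<in>carrier H. g \<otimes>\<^bsub>H\<^esub> h \<otimes>\<^bsub>H\<^esub> inv\<^bsub>H\<^esub> (h \<otimes>\<^bsub>H\<^esub> g) \<in> N"
      by (rule commN[OF gH nN cQ])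
    have cmN': "\<forall>g\<in>carrier K. \<forall>h\<in>carrier K. g \<otimes>\<^bsub>K\<^esub> h \<otimes>\<^bsub>K\<^esub> inv\<^bsub>K\<^esub> (h \<otimes>\<^bsub>K\<^esub> g) \<in> N'"
      using commK[OF gH gK sL fL sLs] cmN unfolding N_def N'_def by blast
    have mN: "maximal_subgroup N H" using maxN[OF gH nN _ _ cmN] sd by blast
    have mN': "maximal_subgroup N' K" using maxN[OF gK nN' _ _ cmN'] sd' by blast
    have "N \<times> N' \<subseteq> L"
    proof
      fix x assume "x \<in> N \<times> N'"
      then obtain n n' where x: "x = (n,n')" "n \<in> N" "n' \<in> N'" by blast
      have a: "(n, \<one>\<^bsub>K\<^esub>) \<in> L" "n \<in> carrier H" using x(2) unfolding N_def by auto
      have b: "(\<one>\<^bsub>H\<^esub>, n') \<in> L" "n' \<in> carrier K" using x(3) unfolding N'_def by auto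
      from Lmul[OF a(1) b(1)] show "x \<in> L" using x(1) a(2) b(2) gH gK by (simp add: group.is_monoid)
    qed
    then show ?thesis using nN nN' mN mN' by blast
  qed
qed

lemma normal_prod1:
  assumes gH: "group H" and gK: "group K" and nN: "N \<lhd> H"
  shows "N \<times> carrier K \<lhd> H \<times>\<times> K"
proof -
  interpret H: group H by fact
  interpret K: group K by fact
  interpret G: group "H \<times>\<times> K" using DirProd_group[OF gH gK] .
  show ?thesis unfolding G.normal_inv_iff
  proof (intro conjI ballI)
    show "subgroup (N \<times> carrier K) (H \<times>\<times> K)"
      using DirProd_subgroups[OF gH normal_imp_subgroup[OF nN] gK K.subgroup_self] .
    fix x y assume x: "x \<in> carrier (H \<times>\<times> K)" and y: "y \<in> N \<times> carrier K"
    obtain x1 x2 where xx: "x = (x1,x2)" "x1 \<in> carrier H" "x2 \<in> carrier K" using x by auto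
    obtain a b where yy: "y = (a, b)" "a \<in> N" "b \<in> carrier K" using y by auto
    have "x1 \<otimes>\<^bsub>H\<^esub> a \<otimes>\<^bsub>H\<^esub> inv\<^bsub>H\<^esub> x1 \<in> N" using nN xx yy H.normal_inv_iff by blast
    then show "x \<otimes>\<^bsub>H \<times>\<times> K\<^esub> y \<otimes>\<^bsub>H \<times>\<times> K\<^esub> inv\<^bsub>H \<times>\<times> K\<^esub> x \<in> N \<times> carrier K"
      using xx yy inv_DirProd[OF gH gK] by simp
  qed
qed

lemma normal_prod2:
  assumes gH: "group H" and gK: "group K" and nN: "N \<lhd> K"
  shows "carrier H \<times> N \<lhd> H \<times>\<times> K"
proof -
  interpret H: group H by fact
  interpret K: group K by fact
  interpret G: group "H \<times>\<times> K" using DirProd_group[OF gH gK] .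
  show ?thesis unfolding G.normal_inv_iff
  proof (intro conjI ballI)
    show "subgroup (carrier H \<times> N) (H \<times>\<times> K)"
      using DirProd_subgroups[OF gH H.subgroup_self gK normal_imp_subgroup[OF nN]] .
    fix x y assume x: "x \<in> carrier (H \<times>\<times> K)" and y: "y \<in> carrier H \<times> N"
    obtain x1 x2 where xx: "x = (x1,x2)" "x1 \<in> carrier H" "x2 \<in> carrier K" using x by auto
    obtain a b where yy: "y = (a, b)" "a \<in> carrier H" "b \<in> N" using y by auto
    have "x2 \<otimes>\<^bsub>K\<^esub> b \<otimes>\<^bsub>K\<^esub> inv\<^bsub>K\<^esub> x2 \<in> N" using nN xx yy K.normal_inv_iff by blast
    then show "x \<otimes>\<^bsub>H \<times>\<times> K\<^esub> y \<otimes>\<^bsub>H \<times>\<times> K\<^esub> inv\<^bsub>H \<times>\<times> K\<^esub> x \<in> carrier H \<times> N"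
      using xx yy inv_DirProd[OF gH gK] by simp
  qed
qed

lemma inter_sub:
  assumes gG: "group G" and F: "\<forall>U\<in>F. subgroup U G"
  shows "subgroup (carrier G \<inter> \<Inter>F) G"
proof -
  interpret G: group G by fact
  show ?thesis
  proof (rule G.subgroupI)
    show "carrier G \<inter> \<Inter>F \<subseteq> carrier G" by blast
    have "\<one>\<^bsub>G\<^esub> \<in> U" if "U \<in> F" for U using F that subgroup.one_closed by blast
    then show "carrier G \<inter> \<Inter>F \<noteq> {}" by blast
  next
    fix a assume a: "a \<in> carrier G \<inter> \<Inter>F"
    have "inv\<^bsub>G\<^esub> a \<in> U" if "U \<in> F" for U
      using a that F subgroup.m_inv_closed by (metis IntD2 InterE)
    then show "inv\<^bsub>G\<^esub> a \<in> carrier G \<inter> \<Inter>F" using a by blast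
  next
    fix a b assume a: "a \<in> carrier G \<inter> \<Inter>F" and b: "b \<in> carrier G \<inter> \<Inter>F"
    have "a \<otimes>\<^bsub>G\<^esub> b \<in> U" if "U \<in> F" for U
      using a b that F subgroup.m_closed by (metis IntD2 InterE)
    then show "a \<otimes>\<^bsub>G\<^esub> b \<in> carrier G \<inter> \<Inter>F" using a b by blast
  qed
qed



lemma exchange:
  assumes gG: "group G" and gp: "general_position G S" and subs: "\<forall>U\<in>S. subgroup U G"
    and LS: "L \<in> S" and nZ: "Z \<lhd> G" and mZ: "maximal_subgroup Z G"
    and nR: "\<not> (carrier G \<inter> \<Inter>(S - {L}) \<subseteq> Z)"
  shows "general_position G (insert Z (S - {L})) \<and> Z \<notin> S - {L}"
proof -
  interpret G: group G by fact
  define S' where "S' = S - {L}"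
  define R where "R = carrier G \<inter> \<Inter>S'"
  have finS: "finite S" and gpS: "\<forall>U\<in>S. \<exists>g\<in>carrier G. (\<forall>Y\<in>S - {U}. g \<in> Y) \<and> g \<notin> U"
    using gp unfolding gp_iff by blast+
  have RS: "R \<subseteq> U" if "U \<in> S'" for U using that unfolding R_def by blast
  obtain r0 where r0: "r0 \<in> R" "r0 \<notin> Z" using nR unfolding R_def S'_def by blast
  have ZS: "Z \<notin> S'" using RS r0 by blast
  have sR: "subgroup R G" unfolding R_def using inter_sub[OF gG] subs unfolding S'_def by blast
  have sZ: "subgroup Z G" using mZ unfolding maximal_subgroup_def by blast
  have mx: "\<And>N. subgroup N G \<Longrightarrow> Z \<subseteq> N \<Longrightarrow> N = Z \<or> N = carrier G"
    using mZ unfolding maximal_subgroup_def by blast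
  have sZR: "subgroup (Z <#>\<^bsub>G\<^esub> R) G" by (rule G.mult_norm_subgroup[OF nZ sR])
  have "Z \<subseteq> Z <#>\<^bsub>G\<^esub> R"
  proof
    fix z assume z: "z \<in> Z"
    have "z \<otimes>\<^bsub>G\<^esub> \<one>\<^bsub>G\<^esub> \<in> Z <#>\<^bsub>G\<^esub> R"
      unfolding set_mult_def using z subgroup.one_closed[OF sR] by blast
    then show "z \<in> Z <#>\<^bsub>G\<^esub> R" using z sZ subgroup.subset by force
  qed
  moreover have "r0 \<in> Z <#>\<^bsub>G\<^esub> R"
  proof -
    have "\<one>\<^bsub>G\<^esub> \<otimes>\<^bsub>G\<^esub> r0 \<in> Z <#>\<^bsub>G\<^esub> R"
      unfolding set_mult_def using r0 subgroup.one_closed[OF sZ] by blast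
    then show ?thesis using r0 unfolding R_def by simp
  qed
  ultimately have ZRG: "Z <#>\<^bsub>G\<^esub> R = carrier G" using mx[OF sZR] r0 by blast
  have "\<forall>U\<in>insert Z S'. \<exists>g\<in>carrier G. (\<forall>Y\<in>insert Z S' - {U}. g \<in> Y) \<and> g \<notin> U"
  proof
    fix U assume U: "U \<in> insert Z S'"
    show "\<exists>g\<in>carrier G. (\<forall>Y\<in>insert Z S' - {U}. g \<in> Y) \<and> g \<notin> U"
    proof (cases "U = Z")
      case True
      have "\<forall>Y\<in>insert Z S' - {U}. r0 \<in> Y" using True RS r0(1) by blast
      moreover have "r0 \<in> carrier G" using r0 unfolding R_def by blast
      ultimately show ?thesis using True r0(2) by blast
    next
      case False
      then have US': "U \<in> S'" using U by blast
      then have US: "U \<in> S" and UL: "U \<noteq> L" unfolding S'_def by auto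
      obtain g where g: "g \<in> carrier G" "\<forall>Y\<in>S - {U}. g \<in> Y" "g \<notin> U" using gpS US by blast
      show ?thesis
      proof (rule ccontr)
        assume con: "\<not> ?thesis"
        obtain z r where zr: "z \<in> Z" "r \<in> R" "g = z \<otimes>\<^bsub>G\<^esub> r"
          using g(1) unfolding ZRG[symmetric] set_mult_def by blast
        have zG: "z \<in> carrier G" using zr(1) sZ subgroup.subset by blast
        have rG: "r \<in> carrier G" using zr(2) unfolding R_def by blast
        have zeq: "z = g \<otimes>\<^bsub>G\<^esub> inv\<^bsub>G\<^esub> r" using zr(3) zG rG by (simp add: G.m_assoc)
        have zY: "z \<in> Y" if Y: "Y \<in> S' - {U}" for Y
        proof -
          have "Y \<in> S - {U}" using Y unfolding S'_def by blast
          then have gY: "g \<in> Y" using g(2) by blast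
          have sY: "subgroup Y G" using Y subs unfolding S'_def by blast
          have "r \<in> Y" using RS zr(2) Y by blast
          then have "inv\<^bsub>G\<^esub> r \<in> Y" by (rule subgroup.m_inv_closed[OF sY])
          then have "g \<otimes>\<^bsub>G\<^esub> inv\<^bsub>G\<^esub> r \<in> Y" by (rule subgroup.m_closed[OF sY gY])
          then show ?thesis using zeq by simp
        qed
        have "\<forall>Y\<in>insert Z S' - {U}. z \<in> Y" using zY zr(1) by blast
        then have zU: "z \<in> U" using con zG by blast
        have "z \<in> R" unfolding R_def using zG zY zU by blast
        have sU: "subgroup U G" using subs US by blast
        have "r \<in> U" using RS zr(2) US' by blast
        have "z \<otimes>\<^bsub>G\<^esub> r \<in> U" by (rule subgroup.m_closed[OF sU zU \<open>r \<in> U\<close>])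
        then show False using zr(3) g(3) by simp
      qed
    qed
  qed
  then have "general_position G (insert Z S')" unfolding gp_iff S'_def using finS by blast
  then show ?thesis using ZS unfolding S'_def by blast
qed



lemma Times_eq_cancel1: "x \<in> C \<Longrightarrow> C \<times> A = C \<times> B \<longleftrightarrow> A = B"
  by auto

lemma upper:
  assumes gH: "group H" and gK: "group K" and finH: "finite (carrier H)" and finK: "finite (carrier K)"
    and hyp: "\<not> (\<exists>N M. N \<lhd> H \<and> M \<lhd> K \<and> simple_group (H Mod N) \<and>
                   \<not> comm_group (H Mod N) \<and> (H Mod N) \<cong> (K Mod M))"
  shows "S \<subseteq> {M. maximal_subgroup M (H \<times>\<times> K)} \<Longrightarrow> general_position (H \<times>\<times> K) S \<Longrightarrow>
         card S \<le> MaxDim H + MaxDim K"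
proof (induction "card {U\<in>S. \<not> pform H K U}" arbitrary: S rule: less_induct)
  case less
  have gG: "group (H \<times>\<times> K)" using DirProd_group[OF gH gK] .
  have oneK: "\<one>\<^bsub>K\<^esub> \<in> carrier K" using gK by (simp add: group.is_monoid)
  have oneH: "\<one>\<^bsub>H\<^esub> \<in> carrier H" using gH by (simp add: group.is_monoid)
  have finS: "finite S" and gpS: "\<forall>U\<in>S. \<exists>g\<in>carrier (H \<times>\<times> K). (\<forall>Y\<in>S - {U}. g \<in> Y) \<and> g \<notin> U"
    using less.prems(2) unfolding gp_iff by blast+
  have subs: "\<forall>U\<in>S. subgroup U (H \<times>\<times> K)" using less.prems(1) unfolding maximal_subgroup_def by blast
  show ?case
  proof (cases "\<exists>L\<in>S. \<not> pform H K L")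
    case False
    define S1 where "S1 = {M. maximal_subgroup M H \<and> M \<times> carrier K \<in> S}"
    define S2 where "S2 = {M. maximal_subgroup M K \<and> carrier H \<times> M \<in> S}"
    have fS1: "finite S1"
      by (rule finite_subset[of _ "Pow (carrier H)"]) (use maxsub_subset finH in \<open>auto simp: S1_def\<close>)
    have fS2: "finite S2"
      by (rule finite_subset[of _ "Pow (carrier K)"]) (use maxsub_subset finK in \<open>auto simp: S2_def\<close>)
    have "S \<subseteq> (\<lambda>M. M \<times> carrier K) ` S1 \<union> (\<lambda>M. carrier H \<times> M) ` S2"
    proof
      fix U assume U: "U \<in> S"
      then have "pform H K U" using False by blast
      then show "U \<in> (\<lambda>M. M \<times> carrier K) ` S1 \<union> (\<lambda>M. carrier H \<times> M) ` S2"
        unfolding pform_def S1_def S2_def using U by blast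
    qed
    then have "card S \<le> card ((\<lambda>M. M \<times> carrier K) ` S1 \<union> (\<lambda>M. carrier H \<times> M) ` S2)"
      by (rule card_mono[rotated]) (use fS1 fS2 in simp)
    also have "\<dots> \<le> card ((\<lambda>M. M \<times> carrier K) ` S1) + card ((\<lambda>M. carrier H \<times> M) ` S2)"
      by (rule card_Un_le)
    also have "\<dots> \<le> card S1 + card S2"
      by (intro add_mono card_image_le fS1 fS2)
    also have "card S1 \<le> MaxDim H"
    proof (rule maxdim_ge[OF finH])
      show "S1 \<subseteq> {M. maximal_subgroup M H}" unfolding S1_def by blast
      show "general_position H S1" unfolding gp_iff
      proof (intro conjI ballI fS1)
        fix M assume M: "M \<in> S1"
        then have MS: "M \<times> carrier K \<in> S" unfolding S1_def by blast
        obtain g where g: "g \<in> carrier (H \<times>\<times> K)" "\<forall>Y\<in>S - {M \<times> carrier K}. g \<in> Y" "g \<notin> M \<times> carrier K"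
          using gpS MS by blast
        obtain h k where hk: "g = (h,k)" "h \<in> carrier H" "k \<in> carrier K" using g(1) by auto
        have "h \<notin> M" using g(3) hk by auto
        moreover have "\<forall>Y\<in>S1 - {M}. h \<in> Y"
        proof
          fix Y assume Y: "Y \<in> S1 - {M}"
          then have "Y \<times> carrier K \<in> S" unfolding S1_def by blast
          moreover have "Y \<times> carrier K \<noteq> M \<times> carrier K"
            using Y Times_eq_cancel2[OF oneK] by blast
          ultimately have "Y \<times> carrier K \<in> S - {M \<times> carrier K}" by simp
          then have "g \<in> Y \<times> carrier K" using g(2) by (rule bspec[rotated])
          then show "h \<in> Y" using hk(1) by simp
        qed
        ultimately show "\<exists>g\<in>carrier H. (\<forall>Y\<in>S1 - {M}. g \<in> Y) \<and> g \<notin> M" using hk(2) by blast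
      qed
    qed
    also have "card S2 \<le> MaxDim K"
    proof (rule maxdim_ge[OF finK])
      show "S2 \<subseteq> {M. maximal_subgroup M K}" unfolding S2_def by blast
      show "general_position K S2" unfolding gp_iff
      proof (intro conjI ballI fS2)
        fix M assume M: "M \<in> S2"
        then have MS: "carrier H \<times> M \<in> S" unfolding S2_def by blast
        obtain g where g: "g \<in> carrier (H \<times>\<times> K)" "\<forall>Y\<in>S - {carrier H \<times> M}. g \<in> Y" "g \<notin> carrier H \<times> M"
          using gpS MS by blast
        obtain h k where hk: "g = (h,k)" "h \<in> carrier H" "k \<in> carrier K" using g(1) by auto
        have "k \<notin> M" using g(3) hk by auto
        moreover have "\<forall>Y\<in>S2 - {M}. k \<in> Y"
        proof
          fix Y assume Y: "Y \<in> S2 - {M}"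
          then have "carrier H \<times> Y \<in> S" unfolding S2_def by blast
          moreover have "carrier H \<times> Y \<noteq> carrier H \<times> M"
            using Y Times_eq_cancel1[OF oneH] by blast
          ultimately have "carrier H \<times> Y \<in> S - {carrier H \<times> M}" by simp
          then have "g \<in> carrier H \<times> Y" using g(2) by (rule bspec[rotated])
          then show "k \<in> Y" using hk(1) by simp
        qed
        ultimately show "\<exists>g\<in>carrier K. (\<forall>Y\<in>S2 - {M}. g \<in> Y) \<and> g \<notin> M" using hk(3) by blast
      qed
    qed
    finally show ?thesis by simp
  next
    case True
    then obtain L where LS: "L \<in> S" and npL: "\<not> pform H K L" by blast
    have mL: "maximal_subgroup L (H \<times>\<times> K)" using less.prems(1) LS by blast
    obtain N N' where NN: "N \<lhd> H" "maximal_subgroup N H" "N' \<lhd> K" "maximal_subgroup N' K" "N \<times> N' \<subseteq> L"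
      using classify[OF gH gK finH hyp mL] npL by blast
    define R where "R = carrier (H \<times>\<times> K) \<inter> \<Inter>(S - {L})"
    obtain g where g: "g \<in> carrier (H \<times>\<times> K)" "\<forall>Y\<in>S - {L}. g \<in> Y" "g \<notin> L" using gpS LS by blast
    have gR: "g \<in> R" unfolding R_def using g by blast
    have "\<not> R \<subseteq> N \<times> carrier K \<or> \<not> R \<subseteq> carrier H \<times> N'"
    proof (rule ccontr)
      assume "\<not> ?thesis"
      then have "g \<in> N \<times> carrier K" "g \<in> carrier H \<times> N'" using gR by blast+
      then have "g \<in> N \<times> N'" by auto
      then show False using NN(5) g(3) by blast
    qed
    then obtain Z where Z: "Z \<lhd> H \<times>\<times> K" "maximal_subgroup Z (H \<times>\<times> K)" "pform H K Z" "\<not> R \<subseteq> Z"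
      using normal_prod1[OF gH gK NN(1)] normal_prod2[OF gH gK NN(3)]
        max_prod1[OF gH gK NN(2)] max_prod2[OF gH gK NN(4)] NN(2,4)
      unfolding pform_def by blast
    have ex: "general_position (H \<times>\<times> K) (insert Z (S - {L})) \<and> Z \<notin> S - {L}"
      by (rule exchange[OF gG less.prems(2) subs LS Z(1) Z(2)]) (use Z(4) in \<open>simp add: R_def\<close>)
    define S'' where "S'' = insert Z (S - {L})"
    have gp'': "general_position (H \<times>\<times> K) S''" using ex unfolding S''_def by blast
    have sub'': "S'' \<subseteq> {M. maximal_subgroup M (H \<times>\<times> K)}"
      using less.prems(1) Z(2) unfolding S''_def by blast
    have cardeq: "card S'' = card S"
    proof -
      have "card S'' = Suc (card (S - {L}))" unfolding S''_def
        using ex finS by (simp add: card_insert_disjoint)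
      also have "\<dots> = card S" using card_Suc_Diff1[OF finS LS] .
      finally show ?thesis .
    qed
    have "{U\<in>S''. \<not> pform H K U} = {U\<in>S. \<not> pform H K U} - {L}"
      unfolding S''_def using Z(3) by blast
    moreover have "card ({U\<in>S. \<not> pform H K U} - {L}) < card {U\<in>S. \<not> pform H K U}"
      by (rule card_Diff1_less) (use finS LS npL in auto)
    ultimately have "card {U\<in>S''. \<not> pform H K U} < card {U\<in>S. \<not> pform H K U}" by simp
    then have "card S'' \<le> MaxDim H + MaxDim K" using less.hyps sub'' gp'' by blast
    then show ?thesis using cardeq by simp
  qed
qed

lemma lower:
  assumes gH: "group H" and gK: "group K" and finH: "finite (carrier H)" and finK: "finite (carrier K)"
  shows "MaxDim H + MaxDim K \<le> MaxDim (H \<times>\<times> K)"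
proof -
  have oneK: "\<one>\<^bsub>K\<^esub> \<in> carrier K" using gK by (simp add: group.is_monoid)
  have oneH: "\<one>\<^bsub>H\<^esub> \<in> carrier H" using gH by (simp add: group.is_monoid)
  obtain S1 where S1: "S1 \<subseteq> {M. maximal_subgroup M H}" "general_position H S1" "card S1 = MaxDim H"
    using maxdim_obtain[OF finH] by blast
  obtain S2 where S2: "S2 \<subseteq> {M. maximal_subgroup M K}" "general_position K S2" "card S2 = MaxDim K"
    using maxdim_obtain[OF finK] by blast
  have fS1: "finite S1" and gp1: "\<forall>U\<in>S1. \<exists>g\<in>carrier H. (\<forall>Y\<in>S1 - {U}. g \<in> Y) \<and> g \<notin> U"
    using S1(2) unfolding gp_iff by blast+
  have fS2: "finite S2" and gp2: "\<forall>U\<in>S2. \<exists>g\<in>carrier K. (\<forall>Y\<in>S2 - {U}. g \<in> Y) \<and> g \<notin> U"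
    using S2(2) unfolding gp_iff by blast+
  have one1: "\<one>\<^bsub>H\<^esub> \<in> M" if "M \<in> S1" for M
    using that S1(1) subgroup.one_closed unfolding maximal_subgroup_def by blast
  have one2: "\<one>\<^bsub>K\<^esub> \<in> M" if "M \<in> S2" for M
    using that S2(1) subgroup.one_closed unfolding maximal_subgroup_def by blast
  have ne1: "M \<noteq> carrier H" if "M \<in> S1" for M
    using that S1(1) unfolding maximal_subgroup_def by blast
  define T1 where "T1 = (\<lambda>M. M \<times> carrier K) ` S1"
  define T2 where "T2 = (\<lambda>M. carrier H \<times> M) ` S2"
  have inj1: "inj_on (\<lambda>M. M \<times> carrier K) S1"
    by (rule inj_onI) (use Times_eq_cancel2[OF oneK] in blast)
  have inj2: "inj_on (\<lambda>M. carrier H \<times> M) S2"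
    by (rule inj_onI) (use Times_eq_cancel1[OF oneH] in blast)
  have disj: "T1 \<inter> T2 = {}"
  proof (rule ccontr)
    assume "T1 \<inter> T2 \<noteq> {}"
    then obtain M M' where M: "M \<in> S1" "M' \<in> S2" "M \<times> carrier K = carrier H \<times> M'"
      unfolding T1_def T2_def by blast
    have "M = carrier H"
    proof
      show "carrier H \<subseteq> M"
      proof
        fix h assume "h \<in> carrier H"
        then have "(h, \<one>\<^bsub>K\<^esub>) \<in> carrier H \<times> M'" using one2[OF M(2)] by blast
        then show "h \<in> M" using M(3) by blast
      qed
      show "M \<subseteq> carrier H" using M(1) S1(1) maxsub_subset by blast
    qed
    then show False using ne1[OF M(1)] by blast
  qed
  have cardT: "card (T1 \<union> T2) = card S1 + card S2"
  proof -
    have "card (T1 \<union> T2) = card T1 + card T2"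
      by (rule card_Un_disjoint) (use fS1 fS2 disj in \<open>simp_all add: T1_def T2_def\<close>)
    also have "\<dots> = card S1 + card S2"
      unfolding T1_def T2_def using card_image[OF inj1] card_image[OF inj2] by simp
    finally show ?thesis .
  qed
  have subT: "T1 \<union> T2 \<subseteq> {M. maximal_subgroup M (H \<times>\<times> K)}"
    unfolding T1_def T2_def using S1(1) S2(1) max_prod1[OF gH gK] max_prod2[OF gH gK] by blast
  have gpT: "general_position (H \<times>\<times> K) (T1 \<union> T2)" unfolding gp_iff
  proof (intro conjI ballI)
    show "finite (T1 \<union> T2)" using fS1 fS2 unfolding T1_def T2_def by simp
    fix U assume U: "U \<in> T1 \<union> T2"
    show "\<exists>g\<in>carrier (H \<times>\<times> K). (\<forall>Y\<in>T1 \<union> T2 - {U}. g \<in> Y) \<and> g \<notin> U"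
    proof (cases "U \<in> T1")
      case True
      then obtain M where M: "M \<in> S1" "U = M \<times> carrier K" unfolding T1_def by blast
      obtain h where h: "h \<in> carrier H" "\<forall>Y\<in>S1 - {M}. h \<in> Y" "h \<notin> M" using gp1 M(1) by blast
      have "\<forall>Y\<in>T1 \<union> T2 - {U}. (h, \<one>\<^bsub>K\<^esub>) \<in> Y"
      proof
        fix Y assume Y: "Y \<in> T1 \<union> T2 - {U}"
        show "(h, \<one>\<^bsub>K\<^esub>) \<in> Y"
        proof (cases "Y \<in> T1")
          case True
          then obtain M' where M': "M' \<in> S1" "Y = M' \<times> carrier K" unfolding T1_def by blast
          then have "M' \<noteq> M" using Y M(2) by blast
          then show ?thesis using h(2) M' oneK by blast
        next
          case False
          then obtain M' where M': "M' \<in> S2" "Y = carrier H \<times> M'" using Y unfolding T2_def by blast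
          then show ?thesis using h(1) one2[OF M'(1)] by blast
        qed
      qed
      moreover have "(h, \<one>\<^bsub>K\<^esub>) \<notin> U" using M(2) h(3) by blast
      moreover have "(h, \<one>\<^bsub>K\<^esub>) \<in> carrier (H \<times>\<times> K)" using h(1) oneK by simp
      ultimately show ?thesis by blast
    next
      case False
      then obtain M where M: "M \<in> S2" "U = carrier H \<times> M" using U unfolding T2_def by blast
      obtain k where k: "k \<in> carrier K" "\<forall>Y\<in>S2 - {M}. k \<in> Y" "k \<notin> M" using gp2 M(1) by blast
      have "\<forall>Y\<in>T1 \<union> T2 - {U}. (\<one>\<^bsub>H\<^esub>, k) \<in> Y"
      proof
        fix Y assume Y: "Y \<in> T1 \<union> T2 - {U}"
        show "(\<one>\<^bsub>H\<^esub>, k) \<in> Y"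
        proof (cases "Y \<in> T1")
          case True
          then obtain M' where M': "M' \<in> S1" "Y = M' \<times> carrier K" unfolding T1_def by blast
          then show ?thesis using k(1) one1[OF M'(1)] by blast
        next
          case False
          then obtain M' where M': "M' \<in> S2" "Y = carrier H \<times> M'" using Y unfolding T2_def by blast
          then have "M' \<noteq> M" using Y M(2) by blast
          then show ?thesis using k(2) M' oneH by blast
        qed
      qed
      moreover have "(\<one>\<^bsub>H\<^esub>, k) \<notin> U" using M(2) k(3) by blast
      moreover have "(\<one>\<^bsub>H\<^esub>, k) \<in> carrier (H \<times>\<times> K)" using k(1) oneH by simp
      ultimately show ?thesis by blast
    qed
  qed
  have finG: "finite (carrier (H \<times>\<times> K))" using finH finK by simp
  have "card (T1 \<union> T2) \<le> MaxDim (H \<times>\<times> K)" by (rule maxdim_ge[OF finG subT gpT])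
  then show ?thesis using cardT S1(3) S2(3) by simp
qed

theorem theorem2p3:
  fixes H :: "('a, 'c) monoid_scheme" and K :: "('b, 'd) monoid_scheme"
  assumes "group H" and "finite (carrier H)"
      and "group K" and "finite (carrier K)"
      and "\<not> (\<exists>N M. N \<lhd> H \<and> M \<lhd> K \<and> simple_group (H Mod N) \<and>
                   \<not> comm_group (H Mod N) \<and> (H Mod N) \<cong> (K Mod M))"
  shows "MaxDim (H \<times>\<times> K) = MaxDim H + MaxDim K"
proof (rule antisym)
  have finG: "finite (carrier (H \<times>\<times> K))" using assms(2,4) by simp
  obtain S where S: "S \<subseteq> {M. maximal_subgroup M (H \<times>\<times> K)}" "general_position (H \<times>\<times> K) S"
      "card S = MaxDim (H \<times>\<times> K)"
    using maxdim_obtain[OF finG] by blast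
  show "MaxDim (H \<times>\<times> K) \<le> MaxDim H + MaxDim K"
    using upper[OF assms(1,3,2,4,5) S(1,2)] S(3) by simp
  show "MaxDim H + MaxDim K \<le> MaxDim (H \<times>\<times> K)"
    by (rule lower[OF assms(1,3,2,4)])
qed


end
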